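(* Let $\Gamma$ be a $2$-arc-transitive strongly regular graph. Then either $\Gamma$ is a complete bipartite graph, or $\Gamma\cong C_5$, or $|\Gamma(u)|<|\Gamma_2(u)|$ for every vertex $u$.
   Context: A strongly regular graph with parameters $(n,k,a,c)$ is a connected $k$-regular graph on $n$ vertices in which adjacent vertices have $a$ common neighbours and distinct non-adjacent vertices have $c$ common neighbours (here of diameter $2$, i.e. non-complete). $2$-arc-transitive means $\mathrm{Aut}(\Gamma)$ is transitive on vertices, on arcs and on $2$-arcs $(v_0,v_1,v_2)$ ($v_0\sim v_1\sim v_2$, $v_0\ne v_2$). $\Gamma(u)$ is the set of neighbours of $u$ and $\Gamma_2(u)$ the set of vertices at distance $2$ from $u$. *)

theory Defs
  imports Main
begin

definition simple_graph :: "'a set \<Rightarrow> ('a \<Rightarrow> 'a \<Rightarrow> bool) \<Rightarrow> bool" where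
  "simple_graph V E \<longleftrightarrow> finite V \<and> V \<noteq> {} \<and>
     (\<forall>x y. E x y \<longrightarrow> x \<in> V \<and> y \<in> V) \<and>
     (\<forall>x y. E x y \<longrightarrow> E y x) \<and> (\<forall>x. \<not> E x x)"

definition nbrs :: "'a set \<Rightarrow> ('a \<Rightarrow> 'a \<Rightarrow> bool) \<Rightarrow> 'a \<Rightarrow> 'a set" where
  "nbrs V E u = {v \<in> V. E u v}"

definition nbrs2 :: "'a set \<Rightarrow> ('a \<Rightarrow> 'a \<Rightarrow> bool) \<Rightarrow> 'a \<Rightarrow> 'a set" where
  "nbrs2 V E u = {w \<in> V. w \<noteq> u \<and> \<not> E u w \<and> (\<exists>v. E u v \<and> E v w)}"

definition graph_connected :: "'a set \<Rightarrow> ('a \<Rightarrow> 'a \<Rightarrow> bool) \<Rightarrow> bool" where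
  "graph_connected V E \<longleftrightarrow> (\<forall>u\<in>V. \<forall>v\<in>V. E\<^sup>*\<^sup>* u v)"

definition strongly_regular ::
  "'a set \<Rightarrow> ('a \<Rightarrow> 'a \<Rightarrow> bool) \<Rightarrow> nat \<Rightarrow> nat \<Rightarrow> nat \<Rightarrow> nat \<Rightarrow> bool" where
  "strongly_regular V E n k a c \<longleftrightarrow>
     simple_graph V E \<and> card V = n \<and> graph_connected V E \<and>
     (\<exists>x\<in>V. \<exists>y\<in>V. x \<noteq> y \<and> \<not> E x y) \<and>
     (\<forall>u\<in>V. card (nbrs V E u) = k) \<and>
     (\<forall>x\<in>V. \<forall>y\<in>V. E x y \<longrightarrow> card (nbrs V E x \<inter> nbrs V E y) = a) \<and>
     (\<forall>x\<in>V. \<forall>y\<in>V. x \<noteq> y \<and> \<not> E x y \<longrightarrow> card (nbrs V E x \<inter> nbrs V E y) = c)"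

definition is_aut :: "'a set \<Rightarrow> ('a \<Rightarrow> 'a \<Rightarrow> bool) \<Rightarrow> ('a \<Rightarrow> 'a) \<Rightarrow> bool" where
  "is_aut V E \<sigma> \<longleftrightarrow> bij_betw \<sigma> V V \<and> (\<forall>x\<in>V. \<forall>y\<in>V. E x y \<longleftrightarrow> E (\<sigma> x) (\<sigma> y))"

definition two_arc_transitive :: "'a set \<Rightarrow> ('a \<Rightarrow> 'a \<Rightarrow> bool) \<Rightarrow> bool" where
  "two_arc_transitive V E \<longleftrightarrow>
     (\<forall>u\<in>V. \<forall>v\<in>V. \<exists>\<sigma>. is_aut V E \<sigma> \<and> \<sigma> u = v) \<and>
     (\<forall>u0 u1 v0 v1. E u0 u1 \<and> E v0 v1 \<longrightarrow>
        (\<exists>\<sigma>. is_aut V E \<sigma> \<and> \<sigma> u0 = v0 \<and> \<sigma> u1 = v1)) \<and>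
     (\<forall>u0 u1 u2 v0 v1 v2. E u0 u1 \<and> E u1 u2 \<and> u0 \<noteq> u2 \<and> E v0 v1 \<and> E v1 v2 \<and> v0 \<noteq> v2 \<longrightarrow>
        (\<exists>\<sigma>. is_aut V E \<sigma> \<and> \<sigma> u0 = v0 \<and> \<sigma> u1 = v1 \<and> \<sigma> u2 = v2))"

definition complete_bipartite :: "'a set \<Rightarrow> ('a \<Rightarrow> 'a \<Rightarrow> bool) \<Rightarrow> bool" where
  "complete_bipartite V E \<longleftrightarrow>
     (\<exists>A B. A \<noteq> {} \<and> B \<noteq> {} \<and> A \<inter> B = {} \<and> A \<union> B = V \<and>
        (\<forall>x\<in>V. \<forall>y\<in>V. E x y \<longleftrightarrow> (x \<in> A \<and> y \<in> B) \<or> (x \<in> B \<and> y \<in> A)))"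

definition iso_C5 :: "'a set \<Rightarrow> ('a \<Rightarrow> 'a \<Rightarrow> bool) \<Rightarrow> bool" where
  "iso_C5 V E \<longleftrightarrow>
     (\<exists>f. bij_betw f V {0..<(5::nat)} \<and>
        (\<forall>x\<in>V. \<forall>y\<in>V. E x y \<longleftrightarrow> (f x + 1) mod 5 = f y \<or> (f y + 1) mod 5 = f x))"

end

theory Submission
  imports Defs
begin

lemma closed_rtc:
  assumes cl: "\<forall>x y z. E x y \<and> E y z \<and> x \<noteq> z \<longrightarrow> E x z"
  shows "E\<^sup>*\<^sup>* x y \<Longrightarrow> x = y \<or> E x y"
proof (induction rule: rtranclp_induct)
  case base then show ?case by simp
next
  case (step y z) then show ?case using cl by blast
qed

lemma dist2_rtc:
  shows "E\<^sup>*\<^sup>* x y \<Longrightarrow> x = y \<or> E x y \<or> (\<exists>p q r. E p q \<and> E q r \<and> p \<noteq> r \<and> \<not> E p r)"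
proof (induction rule: rtranclp_induct)
  case base then show ?case by simp
next
  case (step y z) then show ?case by blast
qed

lemma double_count:
  assumes "finite N" "finite M" "\<And>x y. E x y \<Longrightarrow> E y x" "N \<subseteq> V" "M \<subseteq> V"
  shows "(\<Sum>v\<in>N. card (nbrs V E v \<inter> M)) = (\<Sum>w\<in>M. card (nbrs V E w \<inter> N))"
proof -
  let ?S1 = "Sigma N (\<lambda>v. nbrs V E v \<inter> M)"
  let ?S2 = "Sigma M (\<lambda>w. nbrs V E w \<inter> N)"
  have "card ?S1 = (\<Sum>v\<in>N. card (nbrs V E v \<inter> M))"
    using assms by (subst card_SigmaI) auto
  moreover have "card ?S2 = (\<Sum>w\<in>M. card (nbrs V E w \<inter> N))"
    using assms by (subst card_SigmaI) auto
  moreover have "?S2 = prod.swap ` ?S1"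
    using assms(3-5) by (auto simp: nbrs_def image_iff)
  moreover have "card (prod.swap ` ?S1) = card ?S1"
    by (rule card_image) (simp add: inj_on_def)
  ultimately show ?thesis by simp
qed

theorem lemma4p2:
  fixes V :: "'a set" and E :: "'a \<Rightarrow> 'a \<Rightarrow> bool"
  assumes "strongly_regular V E n k a c"
    and "two_arc_transitive V E"
  shows "complete_bipartite V E \<or> iso_C5 V E \<or>
         (\<forall>u\<in>V. card (nbrs V E u) < card (nbrs2 V E u))"
proof -
  have sr: "simple_graph V E \<and> card V = n \<and> graph_connected V E \<and>
     (\<exists>x\<in>V. \<exists>y\<in>V. x \<noteq> y \<and> \<not> E x y) \<and>
     (\<forall>u\<in>V. card (nbrs V E u) = k) \<and>
     (\<forall>x\<in>V. \<forall>y\<in>V. E x y \<longrightarrow> card (nbrs V E x \<inter> nbrs V E y) = a) \<and>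
     (\<forall>x\<in>V. \<forall>y\<in>V. x \<noteq> y \<and> \<not> E x y \<longrightarrow> card (nbrs V E x \<inter> nbrs V E y) = c)"
    using assms(1) unfolding strongly_regular_def .
  have sg: "finite V \<and> V \<noteq> {} \<and>
     (\<forall>x y. E x y \<longrightarrow> x \<in> V \<and> y \<in> V) \<and>
     (\<forall>x y. E x y \<longrightarrow> E y x) \<and> (\<forall>x. \<not> E x x)"
    using sr unfolding simple_graph_def by (rule conjunct1)
  have finV: "finite V" using sg by simp
  have inV: "\<And>x y. E x y \<Longrightarrow> x \<in> V \<and> y \<in> V" using sg by simp
  have sym: "\<And>x y. E x y \<Longrightarrow> E y x" using sg by simp
  have irr: "\<And>x. \<not> E x x" using sg by simp
  have conn: "\<And>x y. x \<in> V \<Longrightarrow> y \<in> V \<Longrightarrow> E\<^sup>*\<^sup>* x y"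
    using sr unfolding graph_connected_def by simp
  obtain x0 y0 where xy0: "x0 \<in> V" "y0 \<in> V" "x0 \<noteq> y0" "\<not> E x0 y0"
    using sr by blast
  have kdeg: "\<And>u. u \<in> V \<Longrightarrow> card (nbrs V E u) = k"
    using sr by simp
  have cc: "\<And>x y. x \<in> V \<Longrightarrow> y \<in> V \<Longrightarrow> x \<noteq> y \<Longrightarrow> \<not> E x y \<Longrightarrow> card (nbrs V E x \<inter> nbrs V E y) = c"
    using sr by simp
  have aut2: "\<And>u0 u1 u2 v0 v1 v2. E u0 u1 \<Longrightarrow> E u1 u2 \<Longrightarrow> u0 \<noteq> u2 \<Longrightarrow> E v0 v1 \<Longrightarrow> E v1 v2 \<Longrightarrow> v0 \<noteq> v2 \<Longrightarrow>
        (\<exists>\<sigma>. is_aut V E \<sigma> \<and> \<sigma> u0 = v0 \<and> \<sigma> u1 = v1 \<and> \<sigma> u2 = v2)"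
    using assms(2) unfolding two_arc_transitive_def by (metis (no_types))
  have finN: "\<And>u. finite (nbrs V E u)" using finV by (simp add: nbrs_def)
  have tri: "\<not> E x z" if t1: "E x y" and t2: "E y z" and t3: "x \<noteq> z" for x y z
  proof
    assume xz: "E x z"
    have cl: "\<forall>x y z. E x y \<and> E y z \<and> x \<noteq> z \<longrightarrow> E x z"
    proof (intro allI impI)
      fix p q r assume h: "E p q \<and> E q r \<and> p \<noteq> r"
      then obtain \<sigma> where s: "is_aut V E \<sigma>" "\<sigma> x = p" "\<sigma> y = q" "\<sigma> z = r"
        using aut2[OF t1 t2 t3] h by blast
      have "x \<in> V" "z \<in> V" using inV t1 t2 by blast+
      then show "E p r" using s xz unfolding is_aut_def by blast
    qed
    have "x0 = y0 \<or> E x0 y0" using closed_rtc[OF cl conn[OF xy0(1,2)]] .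
    then show False using xy0 by blast
  qed
  obtain p q r where pqr: "E p q" "E q r" "p \<noteq> r" "\<not> E p r"
    using dist2_rtc[OF conn[OF xy0(1,2)]] xy0 by blast
  have c1: "c \<ge> 1"
  proof -
    have "q \<in> nbrs V E p \<inter> nbrs V E r" using pqr inV sym by (auto simp: nbrs_def)
    then have "card (nbrs V E p \<inter> nbrs V E r) \<ge> 1"
      using finN by (metis One_nat_def Suc_leI card_gt_0_iff empty_iff finite_Int)
    then show ?thesis using cc[of p r] pqr inV by blast
  qed
  have ck: "c \<le> k"
  proof -
    have "card (nbrs V E p \<inter> nbrs V E r) \<le> card (nbrs V E p)"
      using finN by (simp add: card_mono)
    then show ?thesis using cc[of p r] kdeg[of p] pqr inV by auto
  qed
  have Mchar: "nbrs2 V E u = {w \<in> V. w \<noteq> u \<and> \<not> E u w}" if uV: "u \<in> V" for u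
  proof
    show "nbrs2 V E u \<subseteq> {w \<in> V. w \<noteq> u \<and> \<not> E u w}" by (auto simp: nbrs2_def)
  next
    show "{w \<in> V. w \<noteq> u \<and> \<not> E u w} \<subseteq> nbrs2 V E u"
    proof
      fix w assume w: "w \<in> {w \<in> V. w \<noteq> u \<and> \<not> E u w}"
      then have "card (nbrs V E u \<inter> nbrs V E w) = c" using cc uV by blast
      then have "nbrs V E u \<inter> nbrs V E w \<noteq> {}" using c1 by auto
      then obtain v where "E u v" "E w v" by (auto simp: nbrs_def)
      then show "w \<in> nbrs2 V E u" using w sym by (auto simp: nbrs2_def)
    qed
  qed
  show ?thesis
  proof (rule ccontr)
    assume neg: "\<not> ?thesis"
    then obtain u where uV: "u \<in> V" and mle: "card (nbrs2 V E u) \<le> k"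
      using kdeg by force
    define N where "N = nbrs V E u"
    define M where "M = nbrs2 V E u"
    have MM: "M = {w \<in> V. w \<noteq> u \<and> \<not> E u w}" using Mchar[OF uV] M_def by simp
    have NN: "N = {w \<in> V. E u w}" using N_def by (simp add: nbrs_def)
    have finM: "finite M" using finV MM by simp
    have cN: "card N = k" using kdeg uV N_def by simp
    have Vdec: "V = insert u (N \<union> M)" using MM NN uV by auto
    have dNM: "N \<inter> M = {}" "u \<notin> N" "u \<notin> M" using MM NN irr by auto
    have vN: "card (nbrs V E v \<inter> M) = k - 1" if "v \<in> N" for v
    proof -
      have "nbrs V E v \<inter> M = nbrs V E v - {u}"
      proof
        show "nbrs V E v \<inter> M \<subseteq> nbrs V E v - {u}" using MM by blast
        show "nbrs V E v - {u} \<subseteq> nbrs V E v \<inter> M"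
        proof
          fix x assume x: "x \<in> nbrs V E v - {u}"
          have uv: "E u v" using that NN by simp
          have "E v x" "x \<in> V" "x \<noteq> u" using x unfolding nbrs_def by auto
          moreover have "\<not> E u x" using tri[OF uv \<open>E v x\<close>] \<open>x \<noteq> u\<close> by metis
          ultimately show "x \<in> nbrs V E v \<inter> M" unfolding MM nbrs_def by simp
        qed
      qed
      moreover have "u \<in> nbrs V E v" using that uV sym unfolding NN nbrs_def by auto
      ultimately show ?thesis using kdeg[of v] that NN finN by simp
    qed
    have wM: "card (nbrs V E w \<inter> N) = c" if "w \<in> M" for w
    proof -
      have "nbrs V E w \<inter> N = nbrs V E u \<inter> nbrs V E w" using N_def by auto
      then show ?thesis using cc[of u w] that MM uV by auto
    qed
    have dc: "k * (k - 1) = card M * c"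
    proof -
      have "(\<Sum>v\<in>N. card (nbrs V E v \<inter> M)) = (\<Sum>w\<in>M. card (nbrs V E w \<inter> N))"
        by (rule double_count) (use finN N_def finM sym MM NN in auto)
      then show ?thesis using vN wM cN by simp
    qed
    have k1: "k \<ge> 1" using c1 ck by simp
    have mle': "card M \<le> k" using mle M_def by simp
    have "k * (k - 1) \<le> k * c" using dc mle' by (simp add: mult_le_mono1 mult.commute)
    then have km1: "k - 1 \<le> c" using k1 by simp
    show False
    proof (cases "c = k")
      case True
      have wN: "nbrs V E w = N" if "w \<in> M" for w
      proof -
        have "nbrs V E w \<inter> N = N"
          using wM[OF that] True cN finN N_def by (metis card_subset_eq inf_le2)
        then have "N \<subseteq> nbrs V E w" by blast
        then show ?thesis using kdeg[of w] that MM cN finN by (metis card_subset_eq mem_Collect_eq)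
      qed
      have "complete_bipartite V E"
        unfolding complete_bipartite_def
      proof (intro exI conjI)
        show "insert u M \<noteq> {}" by simp
        show "N \<noteq> {}" using cN k1 by auto
        show "insert u M \<inter> N = {}" using dNM by auto
        show "insert u M \<union> N = V" using Vdec by auto
        show "\<forall>x\<in>V. \<forall>y\<in>V. E x y = (x \<in> insert u M \<and> y \<in> N \<or> x \<in> N \<and> y \<in> insert u M)"
        proof (intro ballI)
          fix x y assume x: "x \<in> V" and y: "y \<in> V"
          have wN': "\<And>w z. w \<in> M \<Longrightarrow> E w z \<longleftrightarrow> z \<in> N"
            using wN inV unfolding nbrs_def by blast
          have NN': "\<And>x y. x \<in> N \<Longrightarrow> y \<in> N \<Longrightarrow> \<not> E x y"
            using tri sym irr unfolding NN by blast
          show "E x y = (x \<in> insert u M \<and> y \<in> N \<or> x \<in> N \<and> y \<in> insert u M)"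
          proof -
            have xc: "x = u \<or> x \<in> N \<or> x \<in> M" using x Vdec by blast
            have yc: "y = u \<or> y \<in> N \<or> y \<in> M" using y Vdec by blast
            have uN: "\<And>z. z \<in> N \<Longrightarrow> E u z \<and> E z u" using NN sym by blast
            have uM: "\<And>z. z \<in> M \<Longrightarrow> \<not> E u z \<and> \<not> E z u" using MM sym by blast
            show ?thesis
              using xc yc dNM wN'[of x y] wN'[of y x] NN'[of x y] sym[of x y] sym[of y x] uN uM irr
              by (elim disjE) auto
          qed
        qed
      qed
      then show False using neg by blast
    next
      case False
      have cv: "c = k - 1" using False km1 ck by simp
      have k2: "k \<ge> 2" using cv c1 by simp
      have cM: "card M = k" using dc cv k2 by simp
      have "M \<noteq> {}" using cM k2 by (metis card.empty not_numeral_le_zero)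
      then obtain w where w: "w \<in> M" by blast
      have "card (nbrs V E w \<inter> N) < card (nbrs V E w)"
        using wM[OF w] kdeg[of w] w MM cv k2 by simp
      moreover have "\<not> nbrs V E w \<subseteq> N"
      proof
        assume "nbrs V E w \<subseteq> N"
        then have "nbrs V E w \<inter> N = nbrs V E w" by blast
        with calculation show False by simp
      qed
      ultimately obtain w' where w': "E w w'" "w' \<notin> N"
        unfolding nbrs_def by blast
      have w'M: "w' \<in> M" using w' inV sym w MM NN by auto
      have disj: "(nbrs V E w \<inter> N) \<inter> (nbrs V E w' \<inter> N) = {}"
      proof (rule ccontr)
        assume "\<not> ?thesis"
        then obtain z where "E w z" "E w' z" unfolding nbrs_def by blast
        moreover have "w \<noteq> w'" using w' irr by metis
        ultimately have "\<not> E w w'" using tri sym by metis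
        then show False using w' by simp
      qed
      have "card ((nbrs V E w \<inter> N) \<union> (nbrs V E w' \<inter> N)) \<le> card N"
        using finN N_def by (intro card_mono) auto
      then have "2 * (k - 1) \<le> k"
        using card_Un_disjoint[OF _ _ disj] finN wM[OF w] wM[OF w'M] cv cN by simp
      then have k2': "k = 2" using k2 by simp
      obtain pp where pp: "nbrs V E w \<inter> N = {pp}"
        using wM[OF w] cv k2' by (metis One_nat_def card_1_singletonE diff_Suc_1 numeral_2_eq_2)
      obtain qq where qq: "nbrs V E w' \<inter> N = {qq}"
        using wM[OF w'M] cv k2' by (metis One_nat_def card_1_singletonE diff_Suc_1 numeral_2_eq_2)
      have pq: "pp \<noteq> qq" using disj pp qq by auto
      have Nset: "N = {pp, qq}"
      proof -
        have "{pp,qq} \<subseteq> N" using pp qq by auto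
        moreover have "card {pp,qq} = card N" using pq cN k2' by simp
        ultimately show ?thesis using finN N_def by (metis card_subset_eq)
      qed
      have ww: "w \<noteq> w'" using w' irr by auto
      have Mset: "M = {w, w'}"
      proof -
        have "{w,w'} \<subseteq> M" using w w'M by auto
        moreover have "card {w,w'} = card M" using ww cM k2' by simp
        ultimately show ?thesis using finM by (metis card_subset_eq)
      qed
      have Vset: "V = {u, pp, w, w', qq}" using Vdec Nset Mset by auto
      have e1: "E u pp" "E u qq" "E pp w" "E w w'" "E w' qq"
      proof -
        have a1: "pp \<in> nbrs V E w \<inter> N" "qq \<in> nbrs V E w' \<inter> N" using pp qq by auto
        then show "E u pp" "E u qq" using NN by auto
        show "E pp w" using a1(1) sym unfolding nbrs_def by blast
        show "E w w'" by (rule w'(1))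
        show "E w' qq" using a1(2) unfolding nbrs_def by blast
      qed
      have n1: "\<not> E u w" "\<not> E u w'" "\<not> E pp qq" "\<not> E pp w'" "\<not> E qq w"
      proof -
        show "\<not> E u w" using MM w by blast
        show "\<not> E u w'" using MM w'M by blast
        show "\<not> E pp qq" using tri[OF sym[OF e1(1)] e1(2) pq] .
        have ppN: "pp \<in> N" "pp \<in> V" using pp unfolding nbrs_def by auto
        have qqN: "qq \<in> N" "qq \<in> V" using qq unfolding nbrs_def by auto
        show "\<not> E pp w'"
        proof
          assume "E pp w'"
          then have "pp \<in> nbrs V E w' \<inter> N" using ppN sym unfolding nbrs_def by auto
          then show False using qq pq by auto
        qed
        show "\<not> E qq w"
        proof
          assume "E qq w"
          then have "qq \<in> nbrs V E w \<inter> N" using qqN sym unfolding nbrs_def by auto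
          then show False using pp pq by auto
        qed
      qed
      have ds: "u \<noteq> pp" "u \<noteq> qq" "u \<noteq> w" "u \<noteq> w'" "pp \<noteq> w" "pp \<noteq> w'" "qq \<noteq> w" "qq \<noteq> w'"
        using dNM Nset Mset by auto
      define f where "f x = (if x = u then 0 else if x = pp then 1 else if x = w then 2
                             else if x = w' then 3 else (4::nat))" for x
      have fv: "f u = 0" "f pp = 1" "f w = 2" "f w' = 3" "f qq = 4"
        using ds pq ww unfolding f_def by auto
      have "iso_C5 V E"
        unfolding iso_C5_def
      proof (intro exI conjI)
        show "bij_betw f V {0..<5}"
        proof (rule bij_betw_imageI)
          show "inj_on f V" unfolding Vset using fv by (auto simp: inj_on_def)
          show "f ` V = {0..<5}" unfolding Vset using fv by auto
        qed
        show "\<forall>x\<in>V. \<forall>y\<in>V. E x y = ((f x + 1) mod 5 = f y \<or> (f y + 1) mod 5 = f x)"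
          unfolding Vset using fv e1 n1 irr sym by (auto dest: sym)
      qed
      then show False using neg by blast
    qed
  qed
qed

end
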